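(* Let $n,r\geq 1$ with $\gcd(n,r)>1$. Then for every $q\geq 1$, $n$ prisoners do not have a symmetric winning strategy in the prisoners-and-rooms game with $r$ rooms and $q$ states, starting with all rooms in state $0$.
   Context: The game: there are $n$ prisoners and $r$ rooms; each room contains a switch that is in one of $q$ states $\{0,1,\ldots,q-1\}$. The initial state of every room is known to the prisoners. A warden leads prisoners into rooms one at a time according to a schedule, i.e. an infinite sequence of (prisoner, room) pairs; a schedule is valid if every prisoner visits every room infinitely often. The rooms are indistinguishable to the prisoners, and prisoners have no information about time or other visits: on each visit a prisoner observes only the current state of the room, may change it to any state, and may declare that all prisoners have visited all rooms. A (deterministic) strategy assigns to each prisoner a rule determining, from the sequence of states that prisoner has observed so far (and their own previous actions), what new state to set and whether to declare. A strategy is winning if for every valid schedule some prisoner eventually declares, and every declaration is made only at a time when every prisoner has already visited every room. A strategy is symmetric if all prisoners follow the same rule (the same function of their own observation history). *)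

theory Defs
  imports Main
begin

definition valid_schedule :: "nat \<Rightarrow> nat \<Rightarrow> (nat \<Rightarrow> nat \<times> nat) \<Rightarrow> bool" where
  "valid_schedule n r \<sigma> \<longleftrightarrow>
     (\<forall>t. fst (\<sigma> t) < n \<and> snd (\<sigma> t) < r) \<and>
     (\<forall>p<n. \<forall>k<r. \<forall>T. \<exists>t\<ge>T. \<sigma> t = (p, k))"

(* A strategy gives each prisoner p a rule: from the list of states that p has
   observed so far (including the current observation, last element) it yields
   the new state to set and whether to declare.  (Own previous actions are
   determined by the previous observations, since rules are deterministic.) *)
type_synonym strategy = "nat \<Rightarrow> nat list \<Rightarrow> nat \<times> bool"

fun config :: "(nat \<Rightarrow> nat) \<Rightarrow> strategy \<Rightarrow> (nat \<Rightarrow> nat \<times> nat) \<Rightarrow> nat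
               \<Rightarrow> (nat \<Rightarrow> nat) \<times> (nat \<Rightarrow> nat list)" where
  "config init S \<sigma> 0 = (init, \<lambda>_. [])"
| "config init S \<sigma> (Suc t) =
     (let R = fst (config init S \<sigma> t); H = snd (config init S \<sigma> t);
          p = fst (\<sigma> t); k = snd (\<sigma> t);
          h = H p @ [R k]
      in (R(k := fst (S p h)), H(p := h)))"

definition declares :: "(nat \<Rightarrow> nat) \<Rightarrow> strategy \<Rightarrow> (nat \<Rightarrow> nat \<times> nat) \<Rightarrow> nat \<Rightarrow> bool" where
  "declares init S \<sigma> t =
     (let R = fst (config init S \<sigma> t); H = snd (config init S \<sigma> t);
          p = fst (\<sigma> t); k = snd (\<sigma> t)
      in snd (S p (H p @ [R k])))"

definition winning :: "nat \<Rightarrow> nat \<Rightarrow> nat \<Rightarrow> (nat \<Rightarrow> nat) \<Rightarrow> strategy \<Rightarrow> bool" where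
  "winning n r q init S \<longleftrightarrow>
     (\<forall>p<n. \<forall>h. fst (S p h) < q) \<and>
     (\<forall>\<sigma>. valid_schedule n r \<sigma> \<longrightarrow>
        (\<exists>t. declares init S \<sigma> t) \<and>
        (\<forall>t. declares init S \<sigma> t \<longrightarrow> (\<forall>p<n. \<forall>k<r. \<exists>t'\<le>t. \<sigma> t' = (p, k))))"

definition symmetric_winning :: "nat \<Rightarrow> nat \<Rightarrow> nat \<Rightarrow> (nat \<Rightarrow> nat) \<Rightarrow> (nat list \<Rightarrow> nat \<times> bool) \<Rightarrow> bool" where
  "symmetric_winning n r q init \<rho> \<longleftrightarrow> winning n r q init (\<lambda>_. \<rho>)"

end

theory Submission
  imports Defs
begin

definition sched :: "nat \<Rightarrow> nat \<Rightarrow> nat \<Rightarrow> (nat\<Rightarrow>nat) \<Rightarrow> (nat\<Rightarrow>nat) \<Rightarrow> (nat\<Rightarrow>nat) \<Rightarrow> nat \<Rightarrow> nat\<times>nat" where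
 "sched d m s A C E t = (A (t div d) + (t mod d) * m, C (t div d) + (((t mod d) + E (t div d)) mod d) * s)"

lemma modsub: "x < d \<Longrightarrow> e < d \<Longrightarrow> (x + d - e) mod (d::nat) = (if e \<le> x then x - e else x + d - e)"
proof (cases "e \<le> x")
  case True
  assume "x < d"
  then have e1: "x + d - e = (x - e) + d" using True by simp
  have "(x + d - e) mod d = (x - e) mod d" unfolding e1 by simp
  also have "\<dots> = x - e" using \<open>x < d\<close> by simp
  finally show ?thesis using True by simp
next
  case False
  assume "x < d" "e < d"
  then show ?thesis using False by simp
qed

lemma modadd: "j < d \<Longrightarrow> e < d \<Longrightarrow> (j + e) mod (d::nat) = (if j + e < d then j + e else j + e - d)"
proof (cases "j + e < d")
  case False
  assume "j < d" "e < d"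
  then have "j + e = (j + e - d) + d" using False by simp
  then have "(j + e) mod d = (j + e - d) mod d" by (metis mod_add_self2)
  then show ?thesis using False \<open>j < d\<close> \<open>e < d\<close> by simp
qed simp

lemma modsub_inj: "x < d \<Longrightarrow> y < d \<Longrightarrow> e < d \<Longrightarrow> (x + d - e) mod (d::nat) = (y + d - e) mod d \<Longrightarrow> x = y"
  by (simp add: modsub split: if_splits)

context
  fixes d m s n r :: nat and \<rho> :: "nat list \<Rightarrow> nat \<times> bool" and A C E :: "nat \<Rightarrow> nat"
  assumes d: "d > 0" and nm: "n = m*d" and rs: "r = s*d" and A: "\<And>b. A b < m"
    and C: "\<And>b. C b < s" and E: "\<And>b. E b < d"
begin

abbreviation "qc b \<equiv> config (\<lambda>_. 0) (\<lambda>_. \<rho>) (\<lambda>b. (A b, C b)) b"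
abbreviation "hb b \<equiv> snd (qc b) (A b) @ [fst (qc b) (C b)]"
abbreviation "cf t \<equiv> config (\<lambda>_. 0) (\<lambda>_. \<rho>) (sched d m s A C E) t"

definition Inv :: "nat \<Rightarrow> nat \<Rightarrow> bool" where
 "Inv b j \<longleftrightarrow>
   (\<forall>k<r. fst (cf (b*d+j)) k = (if k mod s = C b \<and> (k div s + d - E b) mod d < j then fst (\<rho> (hb b)) else fst (qc b) (k mod s))) \<and>
   (\<forall>p<n. snd (cf (b*d+j)) p = (if p mod m = A b \<and> p div m < j then hb b else snd (qc b) (p mod m)))"

lemma step:
  assumes j: "j < d" and I: "Inv b j"
  shows "Inv b (Suc j)"
proof -
  define t where "t = b*d+j"
  have tdiv: "t div d = b" and tmod: "t mod d = j" using j d unfolding t_def by auto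
  define i where "i = (j + E b) mod d"
  define p where "p = A b + j*m"
  define k where "k = C b + i*s"
  have sig: "sched d m s A C E t = (p,k)" unfolding sched_def p_def k_def i_def using tdiv tmod by simp
  have "p < Suc j * m" using A[of b] unfolding p_def by simp
  also have "\<dots> \<le> d * m" using j by (intro mult_le_mono1) simp
  also have "\<dots> = n" using nm by simp
  finally have pn: "p < n" .
  have pmod: "p mod m = A b" and pdiv: "p div m = j" unfolding p_def using A[of b] by auto
  have id: "i < d" unfolding i_def using d by simp
  have "k < Suc i * s" using C[of b] unfolding k_def by simp
  also have "\<dots> \<le> d * s" using id by (intro mult_le_mono1) simp
  also have "\<dots> = r" using rs by simp
  finally have kr: "k < r" .
  have kmod: "k mod s = C b" and kdiv: "k div s = i" unfolding k_def using C[of b] by auto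
  have ij: "(i + d - E b) mod d = j" unfolding i_def using j E[of b]
    by (simp add: modadd modsub)
  have Hp: "snd (cf t) p = snd (qc b) (A b)" using I pn pmod pdiv unfolding Inv_def t_def by simp
  have Rk: "fst (cf t) k = fst (qc b) (C b)" using I kr kmod kdiv ij unfolding Inv_def t_def by simp
  have cfS: "cf (Suc t) = ((fst (cf t))(k := fst (\<rho> (hb b))), (snd (cf t))(p := hb b))"
    using sig Hp Rk by (simp add: Let_def)
  have tS: "b*d + Suc j = Suc t" unfolding t_def by simp
  show ?thesis unfolding Inv_def tS
  proof (intro conjI allI impI)
    fix k' assume k': "k' < r"
    show "fst (cf (Suc t)) k' = (if k' mod s = C b \<and> (k' div s + d - E b) mod d < Suc j then fst (\<rho> (hb b)) else fst (qc b) (k' mod s))"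
    proof (cases "k' = k")
      case True
      then show ?thesis using cfS kmod kdiv ij by simp
    next
      case False
      have "\<not> (k' mod s = C b \<and> (k' div s + d - E b) mod d = j)"
      proof
        assume h: "k' mod s = C b \<and> (k' div s + d - E b) mod d = j"
        have "k' < d * s" using k' rs by (simp add: mult.commute)
        then have "k' div s < d" by (rule less_mult_imp_div_less)
        then have "k' div s = i" using modsub_inj[of "k' div s" d i "E b"] h ij id E[of b] by simp
        then have "k' = k" using h kmod kdiv by (metis div_mult_mod_eq)
        then show False using False by simp
      qed
      then show ?thesis using cfS False I k' unfolding Inv_def t_def by auto
    qed
  next
    fix p' assume p': "p' < n"
    show "snd (cf (Suc t)) p' = (if p' mod m = A b \<and> p' div m < Suc j then hb b else snd (qc b) (p' mod m))"
    proof (cases "p' = p")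
      case True
      then show ?thesis using cfS pmod pdiv by simp
    next
      case False
      have "\<not> (p' mod m = A b \<and> p' div m = j)"
      proof
        assume h: "p' mod m = A b \<and> p' div m = j"
        then have "p' = p" using pmod pdiv by (metis div_mult_mod_eq)
        then show False using False by simp
      qed
      then show ?thesis using cfS False I p' unfolding Inv_def t_def by auto
    qed
  qed
qed

lemma inv_all: "j \<le> d \<Longrightarrow> Inv b j"
proof (induction b arbitrary: j)
  case 0
  have "Inv 0 0" unfolding Inv_def by simp
  then show ?case using 0 step by (induction j) auto
next
  case (Suc b)
  have "Inv b d" using Suc.IH by simp
  moreover have "\<forall>p<n. p div m < d"
  proof (intro allI impI)
    fix p assume "p < n"
    then have "p < d * m" using nm by (simp add: mult.commute)
    then show "p div m < d" by (rule less_mult_imp_div_less)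
  qed
  ultimately have "Inv (Suc b) 0" unfolding Inv_def using d
    by (auto simp: Let_def add.commute)
  then show ?case using Suc.prems step by (induction j) auto
qed

lemma sched_range: "fst (sched d m s A C E t) < n \<and> snd (sched d m s A C E t) < r"
proof -
  define b j where "b = t div d" and "j = t mod d"
  have j: "j < d" unfolding j_def using d by simp
  define i where "i = (j + E b) mod d"
  have id: "i < d" unfolding i_def using d by simp
  have "A b + j*m < Suc j * m" using A[of b] by simp
  also have "\<dots> \<le> d * m" using j by (intro mult_le_mono1) simp
  also have "\<dots> = n" using nm by simp
  finally have 1: "A b + j*m < n" .
  have "C b + i*s < Suc i * s" using C[of b] by simp
  also have "\<dots> \<le> d * s" using id by (intro mult_le_mono1) simp
  also have "\<dots> = r" using rs by simp
  finally have 2: "C b + i*s < r" .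
  show ?thesis using 1 2 unfolding sched_def b_def j_def i_def by simp
qed

lemma declares_eq: "declares (\<lambda>_. 0) (\<lambda>_. \<rho>) (sched d m s A C E) t = snd (\<rho> (hb (t div d)))"
proof -
  define b j where "b = t div d" and "j = t mod d"
  have j: "j < d" unfolding j_def using d by simp
  have I: "Inv b j" using inv_all j by simp
  have t: "t = b*d+j" unfolding b_def j_def by simp
  have tdiv: "t div d = b" and tmod: "t mod d = j" unfolding b_def j_def by auto
  define i where "i = (j + E b) mod d"
  define p where "p = A b + j*m"
  define k where "k = C b + i*s"
  have sig: "sched d m s A C E t = (p,k)" unfolding sched_def p_def k_def i_def using tdiv tmod by simp
  have "p < Suc j * m" using A[of b] unfolding p_def by simp
  also have "\<dots> \<le> d * m" using j by (intro mult_le_mono1) simp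
  also have "\<dots> = n" using nm by simp
  finally have pn: "p < n" .
  have pmod: "p mod m = A b" and pdiv: "p div m = j" unfolding p_def using A[of b] by auto
  have id: "i < d" unfolding i_def using d by simp
  have "k < Suc i * s" using C[of b] unfolding k_def by simp
  also have "\<dots> \<le> d * s" using id by (intro mult_le_mono1) simp
  also have "\<dots> = r" using rs by simp
  finally have kr: "k < r" .
  have kmod: "k mod s = C b" and kdiv: "k div s = i" unfolding k_def using C[of b] by auto
  have ij: "(i + d - E b) mod d = j" unfolding i_def using j E[of b]
    by (simp add: modadd modsub)
  have Hp: "snd (cf t) p = snd (qc b) (A b)" using I pn pmod pdiv unfolding Inv_def t by simp
  have Rk: "fst (cf t) k = fst (qc b) (C b)" using I kr kmod kdiv ij unfolding Inv_def t by simp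
  show ?thesis unfolding declares_def using sig Hp Rk tdiv by (simp add: Let_def)
qed

end

theorem mainTheorem6:
  fixes n r q :: nat
  assumes "n \<ge> 1" and "r \<ge> 1" and "gcd n r > 1" and "q \<ge> 1"
  shows "\<not> (\<exists>\<rho>. symmetric_winning n r q (\<lambda>_. 0) \<rho>)"
proof
  assume "\<exists>\<rho>. symmetric_winning n r q (\<lambda>_. 0) \<rho>"
  then obtain \<rho> where W: "winning n r q (\<lambda>_. 0) (\<lambda>_. \<rho>)" unfolding symmetric_winning_def by blast
  define d where "d = gcd n r"
  define m where "m = n div d"
  define s where "s = r div d"
  have d2: "d \<ge> 2" using assms(3) unfolding d_def by simp
  have d: "d > 0" using d2 by simp
  have nm: "n = m*d" unfolding m_def d_def by simp
  have rs: "r = s*d" unfolding s_def d_def by simp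
  have m0: "m > 0" using nm assms(1) by (cases m) auto
  have s0: "s > 0" using rs assms(2) by (cases s) auto
  define N where "N = m*s*d"
  have N0: "N > 0" unfolding N_def using m0 s0 d by simp
  define AF where "AF b = (b mod N) mod m" for b
  define CF where "CF b = ((b mod N) div m) mod s" for b
  define EF where "EF b = (b mod N) div m div s" for b
  have AF: "\<And>b. AF b < m" unfolding AF_def using m0 by simp
  have CF: "\<And>b. CF b < s" unfolding CF_def using s0 by simp
  have EF: "EF b < d" for b
  proof -
    have "b mod N < (s*d) * m" unfolding N_def using N0 N_def by (simp add: mult.commute mult.left_commute)
    then have "b mod N div m < d * s" by (metis less_mult_imp_div_less mult.commute)
    then show ?thesis unfolding EF_def by (rule less_mult_imp_div_less)
  qed
  define \<sigma>F where "\<sigma>F = sched d m s AF CF EF"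
  have validF: "valid_schedule n r \<sigma>F"
    unfolding valid_schedule_def
  proof (intro conjI allI impI)
    fix t show "fst (\<sigma>F t) < n"
      unfolding \<sigma>F_def using sched_range[where A=AF and C=CF and E=EF, OF d nm rs AF CF EF] by blast
  next
    fix t show "snd (\<sigma>F t) < r"
      unfolding \<sigma>F_def using sched_range[where A=AF and C=CF and E=EF, OF d nm rs AF CF EF] by blast
  next
    fix p k T assume p: "p < n" and k: "k < r"
    define a j c i where "a = p mod m" and "j = p div m" and "c = k mod s" and "i = k div s"
    have j: "j < d" unfolding j_def using p nm by (metis less_mult_imp_div_less mult.commute)
    have i: "i < d" unfolding i_def using k rs by (metis less_mult_imp_div_less mult.commute)
    have a: "a < m" and c: "c < s" unfolding a_def c_def using m0 s0 by auto
    define e where "e = (i + d - j) mod d"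
    have e: "e < d" unfolding e_def using d by simp
    define x where "x = a + m*(c + s*e)"
    have "c + s*e < s * Suc e" using c by simp
    also have "\<dots> \<le> s * d" using e by (intro mult_le_mono2) simp
    finally have y: "c + s*e < s*d" .
    have "x < m * Suc (c + s*e)" unfolding x_def using a by simp
    also have "\<dots> \<le> m * (s*d)" using y by (intro mult_le_mono2) simp
    finally have xN: "x < N" unfolding N_def by (simp add: mult.assoc)
    define b where "b = T*N + x"
    have bx: "b mod N = x" unfolding b_def using xN by simp
    have xm: "x mod m = a" unfolding x_def using a by simp
    have xd: "x div m = c + s*e" unfolding x_def using a by simp
    have Ab: "AF b = a" unfolding AF_def bx xm ..
    have Cb: "CF b = c" unfolding CF_def bx xd using c by simp
    have Eb: "EF b = e" unfolding EF_def bx xd using c by simp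
    have "(j + e) mod d = i" unfolding e_def using i j by (simp add: modsub modadd)
    define t where "t = b*d + j"
    have tdiv: "t div d = b" and tmod: "t mod d = j" unfolding t_def using j by auto
    have "\<sigma>F t = (p, k)" unfolding \<sigma>F_def sched_def tdiv tmod Ab Cb Eb \<open>(j + e) mod d = i\<close>
      using a_def j_def c_def i_def by (simp add: mult.commute)
    moreover have "t \<ge> T"
    proof -
      have "T \<le> T*N" using N0 by simp
      then have "T \<le> b" unfolding b_def by (rule trans_le_add1)
      also have "b \<le> b*d" using d by simp
      finally show ?thesis unfolding t_def by simp
    qed
    ultimately show "\<exists>t\<ge>T. \<sigma>F t = (p, k)" by blast
  qed
  then obtain t where dt: "declares (\<lambda>_. 0) (\<lambda>_. \<rho>) \<sigma>F t" using W unfolding winning_def by blast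
  define B where "B = Suc (t div d)"
  define EH where "EH b = (if b < B then 0 else EF b)" for b
  have EH: "\<And>b. EH b < d" unfolding EH_def using EF d by simp
  define \<sigma>H where "\<sigma>H = sched d m s AF CF EH"
  have eqH: "\<sigma>H t' = \<sigma>F t'" if "t' \<ge> B*d" for t'
  proof -
    have "B*d div d \<le> t' div d" using that by (rule div_le_mono)
    then have "B \<le> t' div d" using d by simp
    then show ?thesis unfolding \<sigma>H_def \<sigma>F_def sched_def EH_def by simp
  qed
  have validH: "valid_schedule n r \<sigma>H"
    unfolding valid_schedule_def
  proof (intro conjI allI impI)
    fix t show "fst (\<sigma>H t) < n"
      unfolding \<sigma>H_def using sched_range[where A=AF and C=CF and E=EH, OF d nm rs AF CF EH] by blast
  next
    fix t show "snd (\<sigma>H t) < r"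
      unfolding \<sigma>H_def using sched_range[where A=AF and C=CF and E=EH, OF d nm rs AF CF EH] by blast
  next
    fix p k T assume p: "p < n" and k: "k < r"
    obtain t' where "t' \<ge> max T (B*d)" "\<sigma>F t' = (p,k)" using validF p k unfolding valid_schedule_def by blast
    then show "\<exists>t\<ge>T. \<sigma>H t = (p, k)" using eqH[of t'] by auto
  qed
  have "declares (\<lambda>_. 0) (\<lambda>_. \<rho>) \<sigma>H t"
    using dt unfolding \<sigma>H_def \<sigma>F_def
    using declares_eq[where A=AF and C=CF and E=EF, OF d nm rs AF CF EF] declares_eq[where A=AF and C=CF and E=EH, OF d nm rs AF CF EH] by simp
  then have "\<forall>p<n. \<forall>k<r. \<exists>t'\<le>t. \<sigma>H t' = (p, k)" using W validH unfolding winning_def by blast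
  moreover have "s < r" using rs s0 d2 by simp
  moreover have "0 < n" using assms(1) by simp
  ultimately have "\<exists>t'\<le>t. \<sigma>H t' = (0, s)" by blast
  then obtain t' where t': "t' \<le> t" "\<sigma>H t' = (0, s)" by blast
  have "t' div d < B" unfolding B_def using t'(1) by (simp add: div_le_mono le_imp_less_Suc)
  then have "EH (t' div d) = 0" unfolding EH_def by simp
  then have "AF (t' div d) + (t' mod d) * m = 0" and "CF (t' div d) + ((t' mod d) mod d) * s = s"
    using t'(2) unfolding \<sigma>H_def sched_def by auto
  then show False using m0 CF[of "t' div d"] by simp
qed

end
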